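(* Let $\mathcal A$ be a finite non-associative algebra. Then $\mathcal A$ has a qualitative representation if and only if there is a consistent atomic network $(N,\lambda)$ over $\mathcal A$ such that for every triple of atoms $(a,b,c)$ of $\mathcal A$ with $a;b\ge c$ there are nodes $x,y,z\in N$ with $\lambda(x,y)=a$, $\lambda(y,z)=b$ and $\lambda(x,z)=c$.
   Context: A non-associative algebra is an algebra $(A,0,1,+,-,1',\breve{\ },;)$ such that $(A,0,1,+,-)$ is a boolean algebra (with $x\cdot y=-(-x+-y)$ and $x\le y\iff x+y=y$); $1';x=x=x;1'$, $\breve{\breve x}=x$, $(x;y)\breve{}=\breve y;\breve x$; $\breve 0=x;0=0$, $(x+y)\breve{}=\breve x+\breve y$, $x;(y+z)=x;y+x;z$; and the Peircean law holds: $x;y\cdot\breve z=0$ iff $y;z\cdot\breve x=0$. An atom is a minimal nonzero element. A qualitative representation of $\mathcal A$ over base $D$ is an injective map $\phi:A\to\wp(D\times D)$ such that $0^\phi=\varnothing$, $1^\phi=D\times D$, $(1')^\phi=\{(x,x):x\in D\}$, $(a+b)^\phi=a^\phi\cup b^\phi$, $(-a)^\phi=(D\times D)\setminus a^\phi$, $(\breve a)^\phi=\{(y,x):(x,y)\in a^\phi\}$, and for all $a,b,c\in A$: $c^\phi\supseteq a^\phi\circ b^\phi\iff c\ge a;b$ (where $r\circ s$ is relational composition). A network over $\mathcal A$ is a pair $(N,\lambda)$ with $N$ a finite set and $\lambda:N\times N\to A$. It is consistent if for all $x,y,z\in N$: $\lambda(x,x)\le 1'$; $\lambda(x,y);\lambda(y,z)\cdot\lambda(x,z)\ne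 0$; $\lambda(x,y)\cdot\lambda(y,x)\breve{}\ne0$; $\lambda(x,y)\ne 0$. It is atomic if every $\lambda(x,y)$ is an atom. *)

theory Defs
  imports Main
begin

text \<open>A non-associative algebra (A,0,1,+,-,1',converse,;) on the type 'a (carrier = UNIV).\<close>

record 'a nalg =
  nbot  :: 'a
  ntop  :: 'a
  njoin :: "'a \<Rightarrow> 'a \<Rightarrow> 'a"
  ncompl :: "'a \<Rightarrow> 'a"
  nid   :: 'a
  nconv :: "'a \<Rightarrow> 'a"
  ncomp :: "'a \<Rightarrow> 'a \<Rightarrow> 'a"

definition nmeet :: "'a nalg \<Rightarrow> 'a \<Rightarrow> 'a \<Rightarrow> 'a" where
  "nmeet A x y = ncompl A (njoin A (ncompl A x) (ncompl A y))"

definition nle :: "'a nalg \<Rightarrow> 'a \<Rightarrow> 'a \<Rightarrow> bool" where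
  "nle A x y \<longleftrightarrow> njoin A x y = y"

definition boolean_algebra_axioms :: "'a nalg \<Rightarrow> bool" where
  "boolean_algebra_axioms A \<longleftrightarrow>
     (\<forall>x y z. njoin A x (njoin A y z) = njoin A (njoin A x y) z) \<and>
     (\<forall>x y z. nmeet A x (nmeet A y z) = nmeet A (nmeet A x y) z) \<and>
     (\<forall>x y. njoin A x y = njoin A y x) \<and>
     (\<forall>x y. nmeet A x y = nmeet A y x) \<and>
     (\<forall>x y. njoin A x (nmeet A x y) = x) \<and>
     (\<forall>x y. nmeet A x (njoin A x y) = x) \<and>
     (\<forall>x y z. nmeet A x (njoin A y z) = njoin A (nmeet A x y) (nmeet A x z)) \<and>
     (\<forall>x. njoin A x (nbot A) = x) \<and>
     (\<forall>x. nmeet A x (ntop A) = x) \<and>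
     (\<forall>x. njoin A x (ncompl A x) = ntop A) \<and>
     (\<forall>x. nmeet A x (ncompl A x) = nbot A)"

definition nonassoc_algebra :: "'a nalg \<Rightarrow> bool" where
  "nonassoc_algebra A \<longleftrightarrow>
     boolean_algebra_axioms A \<and>
     (\<forall>x. ncomp A (nid A) x = x \<and> ncomp A x (nid A) = x) \<and>
     (\<forall>x. nconv A (nconv A x) = x) \<and>
     (\<forall>x y. nconv A (ncomp A x y) = ncomp A (nconv A y) (nconv A x)) \<and>
     nconv A (nbot A) = nbot A \<and>
     (\<forall>x. ncomp A x (nbot A) = nbot A) \<and>
     (\<forall>x y. nconv A (njoin A x y) = njoin A (nconv A x) (nconv A y)) \<and>
     (\<forall>x y z. ncomp A x (njoin A y z) = njoin A (ncomp A x y) (ncomp A x z)) \<and>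
     (\<forall>x y z. nmeet A (ncomp A x y) (nconv A z) = nbot A
               \<longleftrightarrow> nmeet A (ncomp A y z) (nconv A x) = nbot A)"

definition is_atom :: "'a nalg \<Rightarrow> 'a \<Rightarrow> bool" where
  "is_atom A a \<longleftrightarrow> a \<noteq> nbot A \<and> (\<forall>y. nle A y a \<longrightarrow> y = nbot A \<or> y = a)"

definition qualitative_rep :: "'a nalg \<Rightarrow> 'b set \<Rightarrow> ('a \<Rightarrow> ('b \<times> 'b) set) \<Rightarrow> bool" where
  "qualitative_rep A D \<phi> \<longleftrightarrow>
     inj \<phi> \<and>
     \<phi> (nbot A) = {} \<and>
     \<phi> (ntop A) = D \<times> D \<and>
     \<phi> (nid A) = {(x, x) | x. x \<in> D} \<and>
     (\<forall>a b. \<phi> (njoin A a b) = \<phi> a \<union> \<phi> b) \<and>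
     (\<forall>a. \<phi> (ncompl A a) = (D \<times> D) - \<phi> a) \<and>
     (\<forall>a. \<phi> (nconv A a) = {(y, x). (x, y) \<in> \<phi> a}) \<and>
     (\<forall>a b c. \<phi> a O \<phi> b \<subseteq> \<phi> c \<longleftrightarrow> nle A (ncomp A a b) c)"

definition consistent_network :: "'a nalg \<Rightarrow> 'n set \<Rightarrow> ('n \<Rightarrow> 'n \<Rightarrow> 'a) \<Rightarrow> bool" where
  "consistent_network A N L \<longleftrightarrow>
     (\<forall>x\<in>N. nle A (L x x) (nid A)) \<and>
     (\<forall>x\<in>N. \<forall>y\<in>N. \<forall>z\<in>N. nmeet A (ncomp A (L x y) (L y z)) (L x z) \<noteq> nbot A) \<and>
     (\<forall>x\<in>N. \<forall>y\<in>N. nmeet A (L x y) (nconv A (L y x)) \<noteq> nbot A) \<and>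
     (\<forall>x\<in>N. \<forall>y\<in>N. L x y \<noteq> nbot A)"

definition atomic_network :: "'a nalg \<Rightarrow> 'n set \<Rightarrow> ('n \<Rightarrow> 'n \<Rightarrow> 'a) \<Rightarrow> bool" where
  "atomic_network A N L \<longleftrightarrow> (\<forall>x\<in>N. \<forall>y\<in>N. is_atom A (L x y))"

end

theory Submission
  imports Defs
begin

locale NA =
  fixes A :: "'a nalg"
  assumes fin: "finite (UNIV :: 'a set)"
    and na: "nonassoc_algebra A"
begin

abbreviation J (infixl "\<oplus>" 65) where "x \<oplus> y \<equiv> njoin A x y"
abbreviation M (infixl "\<otimes>" 70) where "x \<otimes> y \<equiv> nmeet A x y"
abbreviation C ("\<ominus> _" [81] 80) where "\<ominus> x \<equiv> ncompl A x"
abbreviation Z ("\<zero>") where "\<zero> \<equiv> nbot A"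
abbreviation T ("\<top>") where "\<top> \<equiv> ntop A"
abbreviation LE (infix "\<sqsubseteq>" 50) where "x \<sqsubseteq> y \<equiv> nle A x y"
abbreviation CV where "CV x \<equiv> nconv A x"
abbreviation CP (infixl ";;" 75) where "x ;; y \<equiv> ncomp A x y"
abbreviation I where "I \<equiv> nid A"
abbreviation atom where "atom x \<equiv> is_atom A x"

lemma ba: "boolean_algebra_axioms A" using na by (simp add: nonassoc_algebra_def)

lemma jassoc: "x \<oplus> (y \<oplus> z) = x \<oplus> y \<oplus> z" using ba unfolding boolean_algebra_axioms_def by metis
lemma massoc: "x \<otimes> (y \<otimes> z) = x \<otimes> y \<otimes> z" using ba unfolding boolean_algebra_axioms_def by metis
lemma jcomm: "x \<oplus> y = y \<oplus> x" using ba unfolding boolean_algebra_axioms_def by metis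
lemma mcomm: "x \<otimes> y = y \<otimes> x" using ba unfolding boolean_algebra_axioms_def by metis
lemma jabs: "x \<oplus> (x \<otimes> y) = x" using ba unfolding boolean_algebra_axioms_def by metis
lemma mabs: "x \<otimes> (x \<oplus> y) = x" using ba unfolding boolean_algebra_axioms_def by metis
lemma mdist: "x \<otimes> (y \<oplus> z) = x \<otimes> y \<oplus> x \<otimes> z" using ba unfolding boolean_algebra_axioms_def by metis
lemma jzero: "x \<oplus> \<zero> = x" using ba unfolding boolean_algebra_axioms_def by metis
lemma mtop: "x \<otimes> \<top> = x" using ba unfolding boolean_algebra_axioms_def by metis
lemma jcompl: "x \<oplus> \<ominus> x = \<top>" using ba unfolding boolean_algebra_axioms_def by metis
lemma mcompl: "x \<otimes> \<ominus> x = \<zero>" using ba unfolding boolean_algebra_axioms_def by metis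

lemma jdist: "x \<oplus> (y \<otimes> z) = (x \<oplus> y) \<otimes> (x \<oplus> z)"
proof -
  have "(x \<oplus> y) \<otimes> (x \<oplus> z) = (x \<oplus> y) \<otimes> x \<oplus> (x \<oplus> y) \<otimes> z" by (rule mdist)
  also have "(x \<oplus> y) \<otimes> x = x" using mcomm[of "x \<oplus> y" x] mabs[of x y] by simp
  also have "(x \<oplus> y) \<otimes> z = x \<otimes> z \<oplus> y \<otimes> z" using mcomm[of "x \<oplus> y" z] mdist[of z x y] mcomm[of z x] mcomm[of z y] by simp
  also have "x \<oplus> (x \<otimes> z \<oplus> y \<otimes> z) = x \<oplus> x \<otimes> z \<oplus> y \<otimes> z" by (rule jassoc)
  also have "x \<oplus> x \<otimes> z = x" by (rule jabs)
  finally show ?thesis by (rule sym)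
qed

interpretation B: abstract_boolean_algebra "nmeet A" "njoin A" "ncompl A" "nbot A" "ntop A"
  apply unfold_locales
  apply (rule massoc[symmetric])
  apply (rule mcomm)
  apply (rule jassoc[symmetric])
  apply (rule jcomm)
  apply (rule mdist)
  apply (rule jdist)
  apply (rule mtop)
  apply (rule jzero)
  apply (rule mcompl)
  apply (rule jcompl)
  done


lemma le_join: "x \<sqsubseteq> y \<longleftrightarrow> x \<oplus> y = y" by (simp add: nle_def)
lemma le_meet: "x \<sqsubseteq> y \<longleftrightarrow> x \<otimes> y = x"
  by (metis le_join jabs mabs jcomm mcomm)
lemma le_refl[simp]: "x \<sqsubseteq> x" by (simp add: le_join)
lemma le_trans: "x \<sqsubseteq> y \<Longrightarrow> y \<sqsubseteq> z \<Longrightarrow> x \<sqsubseteq> z"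
  by (metis le_join jassoc)
lemma le_antisym: "x \<sqsubseteq> y \<Longrightarrow> y \<sqsubseteq> x \<Longrightarrow> x = y"
  by (metis le_join jcomm)
lemma meet_le1[simp]: "x \<otimes> y \<sqsubseteq> x" by (metis le_join jabs jcomm)
lemma meet_le2[simp]: "x \<otimes> y \<sqsubseteq> y" by (metis meet_le1 mcomm)
lemma join_ge1[simp]: "x \<sqsubseteq> x \<oplus> y" by (metis le_meet mabs)
lemma join_ge2[simp]: "y \<sqsubseteq> x \<oplus> y" by (metis join_ge1 jcomm)
lemma le_meet_iff: "z \<sqsubseteq> x \<otimes> y \<longleftrightarrow> z \<sqsubseteq> x \<and> z \<sqsubseteq> y"
  by (metis le_meet le_trans meet_le1 meet_le2 massoc)
lemma join_le_iff: "x \<oplus> y \<sqsubseteq> z \<longleftrightarrow> x \<sqsubseteq> z \<and> y \<sqsubseteq> z"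
  by (metis le_join le_trans join_ge1 join_ge2 jassoc)
lemma le_top[simp]: "x \<sqsubseteq> \<top>" by (simp add: le_meet mtop)
lemma bot_le[simp]: "\<zero> \<sqsubseteq> x" by (metis le_join jzero jcomm)
lemma le_bot: "x \<sqsubseteq> \<zero> \<Longrightarrow> x = \<zero>" by (metis le_antisym bot_le)
lemma split: "x = x \<otimes> y \<oplus> x \<otimes> \<ominus> y" by (metis mdist jcompl mtop)
lemma meet_compl_zero: "x \<otimes> \<ominus> y = \<zero> \<longleftrightarrow> x \<sqsubseteq> y"
  by (metis split jzero le_meet massoc mcompl B.conj_zero_right)
lemma meet_zero_le_compl: "x \<otimes> y = \<zero> \<longleftrightarrow> x \<sqsubseteq> \<ominus> y"
  by (metis meet_compl_zero B.double_compl)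
lemma le_compl_swap: "x \<sqsubseteq> \<ominus> y \<longleftrightarrow> y \<sqsubseteq> \<ominus> x"
  by (metis meet_zero_le_compl mcomm)

lemma atom_nz: "atom a \<Longrightarrow> a \<noteq> \<zero>" by (simp add: is_atom_def)
lemma atom_le: "atom a \<Longrightarrow> y \<sqsubseteq> a \<Longrightarrow> y = \<zero> \<or> y = a" by (simp add: is_atom_def)
lemma le_zero_compl: "x \<sqsubseteq> y \<Longrightarrow> x \<sqsubseteq> \<ominus> y \<Longrightarrow> x = \<zero>"
proof -
  assume "x \<sqsubseteq> y" "x \<sqsubseteq> \<ominus> y"
  then have "x \<sqsubseteq> y \<otimes> \<ominus> y" by (simp only: le_meet_iff)
  then show ?thesis by (simp add: mcompl le_bot)
qed
lemma atom_compl: "atom a \<Longrightarrow> a \<sqsubseteq> \<ominus> x \<longleftrightarrow> \<not> a \<sqsubseteq> x"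
proof -
  assume a: "atom a"
  have "a \<otimes> x = \<zero> \<or> a \<otimes> x = a" using atom_le[OF a, of "a \<otimes> x"] by simp
  then show ?thesis
  proof
    assume h: "a \<otimes> x = \<zero>"
    then have "a \<sqsubseteq> \<ominus> x" by (simp add: meet_zero_le_compl)
    moreover have "\<not> a \<sqsubseteq> x" using h atom_nz[OF a] by (simp add: le_meet)
    ultimately show ?thesis by simp
  next
    assume h: "a \<otimes> x = a"
    then have "a \<sqsubseteq> x" by (simp add: le_meet)
    moreover have "\<not> a \<sqsubseteq> \<ominus> x" using le_zero_compl[OF \<open>a \<sqsubseteq> x\<close>] atom_nz[OF a] by blast
    ultimately show ?thesis by simp
  qed
qed
lemma atom_join: "atom a \<Longrightarrow> a \<sqsubseteq> x \<oplus> y \<longleftrightarrow> a \<sqsubseteq> x \<or> a \<sqsubseteq> y"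
proof -
  assume a: "atom a"
  have "\<not> a \<sqsubseteq> x \<Longrightarrow> \<not> a \<sqsubseteq> y \<Longrightarrow> \<not> a \<sqsubseteq> x \<oplus> y"
  proof -
    assume "\<not> a \<sqsubseteq> x" "\<not> a \<sqsubseteq> y"
    then have "a \<sqsubseteq> \<ominus> x \<otimes> \<ominus> y" using atom_compl[OF a] by (simp add: le_meet_iff)
    then have "a \<sqsubseteq> \<ominus> (x \<oplus> y)" by simp
    then show ?thesis using atom_compl[OF a, of "x \<oplus> y"] by blast
  qed
  then show ?thesis using le_trans join_ge1 join_ge2 by blast
qed
lemma atom_meet_nz: "atom a \<Longrightarrow> a \<otimes> x \<noteq> \<zero> \<longleftrightarrow> a \<sqsubseteq> x"
  using atom_compl meet_zero_le_compl by blast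
lemma atoms_eq: "atom a \<Longrightarrow> atom b \<Longrightarrow> a \<otimes> b \<noteq> \<zero> \<Longrightarrow> a = b"
  using atom_meet_nz atom_le atom_nz by metis
lemma atom_not_bot: "atom a \<Longrightarrow> \<not> a \<sqsubseteq> \<zero>"
  using atom_nz le_bot by blast


lemma atom_below: "x \<noteq> \<zero> \<Longrightarrow> \<exists>a. atom a \<and> a \<sqsubseteq> x"
proof -
  assume x: "x \<noteq> \<zero>"
  let ?P = "\<lambda>y. y \<noteq> \<zero> \<and> y \<sqsubseteq> x"
  let ?m = "\<lambda>y. card {z. z \<sqsubseteq> y}"
  obtain y where y: "?P y" and ymin: "\<And>z. ?P z \<Longrightarrow> ?m y \<le> ?m z"
    using ex_has_least_nat[of ?P x ?m] x by auto
  have "atom y"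
    unfolding is_atom_def
  proof (intro conjI allI impI)
    show "y \<noteq> \<zero>" using y by simp
    fix z assume zy: "z \<sqsubseteq> y"
    show "z = \<zero> \<or> z = y"
    proof (rule ccontr)
      assume "\<not> (z = \<zero> \<or> z = y)"
      then have z0: "z \<noteq> \<zero>" and zy': "z \<noteq> y" by auto
      have "?P z" using z0 zy y le_trans by blast
      then have le: "?m y \<le> ?m z" by (rule ymin)
      have "{w. w \<sqsubseteq> z} \<subset> {w. w \<sqsubseteq> y}"
      proof
        show "{w. w \<sqsubseteq> z} \<subseteq> {w. w \<sqsubseteq> y}" using zy le_trans by blast
        show "{w. w \<sqsubseteq> z} \<noteq> {w. w \<sqsubseteq> y}"
        proof
          assume "{w. w \<sqsubseteq> z} = {w. w \<sqsubseteq> y}"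
          then have "y \<sqsubseteq> z" by auto
          then show False using zy zy' le_antisym by blast
        qed
      qed
      then have "?m z < ?m y" by (rule psubset_card_mono[OF finite_subset[OF subset_UNIV fin]])
      then show False using le by simp
    qed
  qed
  then show ?thesis using y by blast
qed

lemma not_le_atom: "\<not> x \<sqsubseteq> y \<Longrightarrow> \<exists>a. atom a \<and> a \<sqsubseteq> x \<and> \<not> a \<sqsubseteq> y"
proof -
  assume "\<not> x \<sqsubseteq> y"
  then have "x \<otimes> \<ominus> y \<noteq> \<zero>" by (simp add: meet_compl_zero)
  then obtain a where a: "atom a" "a \<sqsubseteq> x \<otimes> \<ominus> y" using atom_below by blast
  then have "a \<sqsubseteq> x" "a \<sqsubseteq> \<ominus> y" by (simp_all only: le_meet_iff)
  then show ?thesis using a atom_compl by blast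
qed

lemma atom_ext: assumes h: "\<And>a. atom a \<Longrightarrow> a \<sqsubseteq> x \<longleftrightarrow> a \<sqsubseteq> y" shows "x = y"
proof (rule le_antisym)
  show "x \<sqsubseteq> y"
  proof (rule ccontr)
    assume "\<not> x \<sqsubseteq> y"
    then obtain a where "atom a" "a \<sqsubseteq> x" "\<not> a \<sqsubseteq> y" using not_le_atom by blast
    then show False using h by blast
  qed
  show "y \<sqsubseteq> x"
  proof (rule ccontr)
    assume "\<not> y \<sqsubseteq> x"
    then obtain a where "atom a" "a \<sqsubseteq> y" "\<not> a \<sqsubseteq> x" using not_le_atom by blast
    then show False using h by blast
  qed
qed

lemma atom_induct:
  assumes add: "\<And>u v. P (u \<oplus> v) \<longleftrightarrow> P u \<or> P v" and nz: "\<not> P \<zero>" and px: "P x"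
  shows "\<exists>a. atom a \<and> a \<sqsubseteq> x \<and> P a"
proof -
  have "\<And>x. card {a. atom a \<and> a \<sqsubseteq> x} = n \<Longrightarrow> P x \<Longrightarrow> \<exists>a. atom a \<and> a \<sqsubseteq> x \<and> P a" for n
  proof (induction n rule: less_induct)
    case (less n x)
    have "x \<noteq> \<zero>"
    proof
      assume "x = \<zero>" then show False using less.prems(2) nz by simp
    qed
    then obtain a where a: "atom a" "a \<sqsubseteq> x" using atom_below by blast
    have xa: "x \<otimes> a = a" using a(2) by (simp add: le_meet mcomm)
    have xeq: "x = a \<oplus> x \<otimes> \<ominus> a" using split[of x a] unfolding xa .
    have "P (a \<oplus> x \<otimes> \<ominus> a)" using less.prems(2) xeq by (rule back_subst)
    then have "P a \<or> P (x \<otimes> \<ominus> a)" using add by blast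
    then show ?case
    proof
      assume "P a" then show ?thesis using a by blast
    next
      assume p: "P (x \<otimes> \<ominus> a)"
      have sub: "{b. atom b \<and> b \<sqsubseteq> x \<otimes> \<ominus> a} \<subset> {b. atom b \<and> b \<sqsubseteq> x}"
      proof
        show "{b. atom b \<and> b \<sqsubseteq> x \<otimes> \<ominus> a} \<subseteq> {b. atom b \<and> b \<sqsubseteq> x}"
        proof (rule subsetI)
          fix b assume "b \<in> {b. atom b \<and> b \<sqsubseteq> x \<otimes> \<ominus> a}"
          then show "b \<in> {b. atom b \<and> b \<sqsubseteq> x}" by (simp add: le_meet_iff)
        qed
        have na: "\<not> a \<sqsubseteq> x \<otimes> \<ominus> a"
        proof
          assume "a \<sqsubseteq> x \<otimes> \<ominus> a"
          then have "a \<sqsubseteq> \<ominus> a" by (simp add: le_meet_iff)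
          then show False using atom_compl[OF a(1), of a] by simp
        qed
        show "{b. atom b \<and> b \<sqsubseteq> x \<otimes> \<ominus> a} \<noteq> {b. atom b \<and> b \<sqsubseteq> x}"
        proof
          assume eq: "{b. atom b \<and> b \<sqsubseteq> x \<otimes> \<ominus> a} = {b. atom b \<and> b \<sqsubseteq> x}"
          have "a \<in> {b. atom b \<and> b \<sqsubseteq> x}" using a by simp
          then have "a \<in> {b. atom b \<and> b \<sqsubseteq> x \<otimes> \<ominus> a}" by (simp only: eq)
          then show False using na by simp
        qed
      qed
      then have "card {b. atom b \<and> b \<sqsubseteq> x \<otimes> \<ominus> a} < n"
        using psubset_card_mono[OF finite_subset[OF subset_UNIV fin] sub] less.prems(1) by simp
      from less.IH[OF this refl p] obtain b where "atom b" "b \<sqsubseteq> x \<otimes> \<ominus> a" "P b" by blast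
      then show ?thesis using le_meet_iff by blast
    qed
  qed
  then show ?thesis using px by blast
qed

lemma ax: "nonassoc_algebra A" by (rule na)
lemma n1: "\<forall>x. I ;; x = x \<and> x ;; I = x" using na unfolding nonassoc_algebra_def by (elim conjE) assumption
lemma n2: "\<forall>x. CV (CV x) = x" using na unfolding nonassoc_algebra_def by (elim conjE) assumption
lemma n3: "\<forall>x y. CV (x ;; y) = CV y ;; CV x" using na unfolding nonassoc_algebra_def by (elim conjE) assumption
lemma n4: "CV \<zero> = \<zero>" using na unfolding nonassoc_algebra_def by (elim conjE) assumption
lemma n5: "\<forall>x. x ;; \<zero> = \<zero>" using na unfolding nonassoc_algebra_def by (elim conjE) assumption
lemma n6: "\<forall>x y. CV (x \<oplus> y) = CV x \<oplus> CV y" using na unfolding nonassoc_algebra_def by (elim conjE) assumption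
lemma n7: "\<forall>x y z. x ;; (y \<oplus> z) = x ;; y \<oplus> x ;; z" using na unfolding nonassoc_algebra_def by (elim conjE) assumption
lemma peirce: "\<forall>x y z. (x ;; y) \<otimes> CV z = \<zero> \<longleftrightarrow> (y ;; z) \<otimes> CV x = \<zero>" using na unfolding nonassoc_algebra_def by (elim conjE) assumption
lemma id_comp[simp]: "I ;; x = x" using n1 by blast
lemma comp_id[simp]: "x ;; I = x" using n1 by blast
lemma conv_conv[simp]: "CV (CV x) = x" using n2 by blast
lemma conv_comp: "CV (x ;; y) = CV y ;; CV x" using n3 by blast
lemma conv_zero[simp]: "CV \<zero> = \<zero>" using n4 by blast
lemma comp_zero[simp]: "x ;; \<zero> = \<zero>" using n5 by blast
lemma conv_join: "CV (x \<oplus> y) = CV x \<oplus> CV y" using n6 by blast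
lemma comp_join: "x ;; (y \<oplus> z) = x ;; y \<oplus> x ;; z" using n7 by blast

lemma conv_inj: "CV x = CV y \<Longrightarrow> x = y" by (metis conv_conv)
lemma join_comp: "(x \<oplus> y) ;; z = x ;; z \<oplus> y ;; z"
proof (rule conv_inj)
  show "CV ((x \<oplus> y) ;; z) = CV (x ;; z \<oplus> y ;; z)"
    by (simp add: conv_comp conv_join comp_join)
qed
lemma zero_comp[simp]: "\<zero> ;; x = \<zero>"
  by (metis conv_comp conv_conv conv_zero comp_zero)
lemma conv_mono: "x \<sqsubseteq> y \<Longrightarrow> CV x \<sqsubseteq> CV y"
  by (simp add: le_join conv_join[symmetric])
lemma conv_le: "CV x \<sqsubseteq> y \<longleftrightarrow> x \<sqsubseteq> CV y"
  by (metis conv_mono conv_conv)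
lemma comp_mono2: "y \<sqsubseteq> y' \<Longrightarrow> x ;; y \<sqsubseteq> x ;; y'"
  by (simp add: le_join comp_join[symmetric])
lemma comp_mono1: "x \<sqsubseteq> x' \<Longrightarrow> x ;; y \<sqsubseteq> x' ;; y"
  by (simp add: le_join join_comp[symmetric])
lemma comp_mono: "x \<sqsubseteq> x' \<Longrightarrow> y \<sqsubseteq> y' \<Longrightarrow> x ;; y \<sqsubseteq> x' ;; y'"
  by (metis comp_mono1 comp_mono2 le_trans)
lemma conv_id[simp]: "CV I = I"
proof -
  have "CV (I ;; CV I) = CV (CV I) ;; CV I" by (rule conv_comp)
  then have "CV (CV I) = I ;; CV I" by simp
  then show ?thesis by simp
qed
lemma atom_conv: "atom a \<Longrightarrow> atom (CV a)"
  unfolding is_atom_def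
  by (metis conv_conv conv_zero conv_le)


lemma decomp: assumes d: "atom d" and dle: "d \<sqsubseteq> x ;; y"
  shows "\<exists>a b. atom a \<and> atom b \<and> a \<sqsubseteq> x \<and> b \<sqsubseteq> y \<and> d \<sqsubseteq> a ;; b"
proof -
  have "\<exists>a. atom a \<and> a \<sqsubseteq> x \<and> d \<sqsubseteq> a ;; y"
  proof (rule atom_induct[where P = "\<lambda>u. d \<sqsubseteq> u ;; y"])
    show "d \<sqsubseteq> (u \<oplus> v) ;; y \<longleftrightarrow> d \<sqsubseteq> u ;; y \<or> d \<sqsubseteq> v ;; y" for u v
      by (simp only: join_comp atom_join[OF d])
    show "\<not> d \<sqsubseteq> \<zero> ;; y" using atom_not_bot[OF d] by simp
    show "d \<sqsubseteq> x ;; y" by (rule dle)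
  qed
  then obtain a where a: "atom a" "a \<sqsubseteq> x" "d \<sqsubseteq> a ;; y" by blast
  have "\<exists>b. atom b \<and> b \<sqsubseteq> y \<and> d \<sqsubseteq> a ;; b"
  proof (rule atom_induct[where P = "\<lambda>v. d \<sqsubseteq> a ;; v"])
    show "d \<sqsubseteq> a ;; (u \<oplus> v) \<longleftrightarrow> d \<sqsubseteq> a ;; u \<or> d \<sqsubseteq> a ;; v" for u v
      by (simp only: comp_join atom_join[OF d])
    show "\<not> d \<sqsubseteq> a ;; \<zero>" using atom_not_bot[OF d] by simp
    show "d \<sqsubseteq> a ;; y" by (rule a(3))
  qed
  then show ?thesis using a by blast
qed

lemma atom_id: assumes a: "atom a" shows "\<exists>e. atom e \<and> e \<sqsubseteq> I \<and> a \<sqsubseteq> a ;; e"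
proof (rule atom_induct[where P = "\<lambda>v. a \<sqsubseteq> a ;; v"])
  show "a \<sqsubseteq> a ;; (u \<oplus> v) \<longleftrightarrow> a \<sqsubseteq> a ;; u \<or> a \<sqsubseteq> a ;; v" for u v
    by (simp only: comp_join atom_join[OF a])
  show "\<not> a \<sqsubseteq> a ;; \<zero>" using atom_not_bot[OF a] by simp
  show "a \<sqsubseteq> a ;; I" by simp
qed

lemma meet_nz_mono: "p \<sqsubseteq> q \<Longrightarrow> p \<otimes> r \<noteq> \<zero> \<Longrightarrow> q \<otimes> r \<noteq> \<zero>"
proof -
  assume pq: "p \<sqsubseteq> q" and nz: "p \<otimes> r \<noteq> \<zero>"
  show "q \<otimes> r \<noteq> \<zero>"
  proof
    assume "q \<otimes> r = \<zero>"
    moreover have "p \<otimes> r \<sqsubseteq> q \<otimes> r" using pq le_meet_iff le_trans meet_le1 meet_le2 by metis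
    ultimately show False using nz le_bot by simp
  qed
qed


lemma rep_to_net:
  assumes rep: "qualitative_rep A D \<phi>"
  shows "\<exists>(N :: nat set) L. finite N \<and> consistent_network A N L \<and> atomic_network A N L \<and>
            (\<forall>a b c. is_atom A a \<and> is_atom A b \<and> is_atom A c \<and> nle A c (ncomp A a b) \<longrightarrow>
               (\<exists>x\<in>N. \<exists>y\<in>N. \<exists>z\<in>N. L x y = a \<and> L y z = b \<and> L x z = c))"
proof -
  have pinj: "inj \<phi>" and p0: "\<phi> \<zero> = {}" and ptop: "\<phi> \<top> = D \<times> D"
    and pid: "\<phi> I = {(x, x) | x. x \<in> D}"
    and pjoin: "\<And>a b. \<phi> (a \<oplus> b) = \<phi> a \<union> \<phi> b"
    and pcompl: "\<And>a. \<phi> (\<ominus> a) = (D \<times> D) - \<phi> a"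
    and pconv: "\<And>a. \<phi> (CV a) = {(y, x). (x, y) \<in> \<phi> a}"
    and pcomp: "\<And>a b c. \<phi> a O \<phi> b \<subseteq> \<phi> c \<longleftrightarrow> a ;; b \<sqsubseteq> c"
    using rep unfolding qualitative_rep_def by auto
  have pmono: "\<phi> a \<subseteq> \<phi> b" if "a \<sqsubseteq> b" for a b
  proof -
    have "\<phi> b = \<phi> (a \<oplus> b)" using that by (simp add: le_join)
    then show ?thesis using pjoin by auto
  qed
  have psub: "\<phi> a \<subseteq> D \<times> D" for a using pmono[OF le_top] ptop by simp
  have pmeet: "\<phi> (a \<otimes> b) = \<phi> a \<inter> \<phi> b" for a b
    using psub[of a] psub[of b] unfolding nmeet_def pcompl pjoin by blast
  have pnz: "a \<noteq> \<zero>" if "\<phi> a \<noteq> {}" for a using that p0 by auto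
  have ex_lab: "\<exists>a. atom a \<and> (u, v) \<in> \<phi> a" if "u \<in> D" "v \<in> D" for u v
  proof -
    have "\<exists>a. atom a \<and> a \<sqsubseteq> \<top> \<and> (u, v) \<in> \<phi> a"
    proof (rule atom_induct[where P = "\<lambda>x. (u, v) \<in> \<phi> x"])
      show "(u, v) \<in> \<phi> (x \<oplus> y) \<longleftrightarrow> (u, v) \<in> \<phi> x \<or> (u, v) \<in> \<phi> y" for x y
        by (simp add: pjoin)
      show "(u, v) \<notin> \<phi> \<zero>" by (simp add: p0)
      show "(u, v) \<in> \<phi> \<top>" using that by (simp add: ptop)
    qed
    then show ?thesis by blast
  qed
  have uniq: "a = b" if "atom a" "atom b" "(u, v) \<in> \<phi> a" "(u, v) \<in> \<phi> b" for a b u v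
  proof -
    have "\<phi> (a \<otimes> b) \<noteq> {}" using that(3,4) pmeet by auto
    then show ?thesis using atoms_eq[OF that(1,2)] pnz by blast
  qed
  define lab where "lab u v = (THE a. atom a \<and> (u, v) \<in> \<phi> a)" for u v
  have lab: "atom (lab u v) \<and> (u, v) \<in> \<phi> (lab u v)" if uv: "u \<in> D" "v \<in> D" for u v
  proof -
    obtain a where a: "atom a" "(u, v) \<in> \<phi> a" using ex_lab[OF uv] by blast
    have "lab u v = a" unfolding lab_def
      by (rule the_equality) (use a uniq in blast)+
    then show ?thesis using a by simp
  qed
  have lab_eq: "lab u v = a" if "u \<in> D" "v \<in> D" "atom a" "(u, v) \<in> \<phi> a" for u v a
    using lab[OF that(1,2)] uniq that(3,4) by blast
  have triple: "\<exists>u v w. (u, v) \<in> \<phi> a \<and> (v, w) \<in> \<phi> b \<and> (u, w) \<in> \<phi> c"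
    if "atom a" "atom b" "atom c" "c \<sqsubseteq> a ;; b" for a b c
  proof (rule ccontr)
    assume no: "\<not> (\<exists>u v w. (u, v) \<in> \<phi> a \<and> (v, w) \<in> \<phi> b \<and> (u, w) \<in> \<phi> c)"
    have "\<phi> a O \<phi> b \<subseteq> \<phi> (\<ominus> c)"
    proof
      fix p assume p: "p \<in> \<phi> a O \<phi> b"
      then obtain u v w where "p = (u, w)" "(u, v) \<in> \<phi> a" "(v, w) \<in> \<phi> b" by blast
      moreover have "(u, v) \<in> D \<times> D" "(v, w) \<in> D \<times> D" using calculation(2,3) psub by blast+
      ultimately show "p \<in> \<phi> (\<ominus> c)" using no by (auto simp: pcompl)
    qed
    then have "a ;; b \<sqsubseteq> \<ominus> c" using pcomp by blast
    then have "c \<sqsubseteq> \<ominus> c" using that(4) le_trans by blast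
    then show False using le_zero_compl[OF le_refl] atom_nz[OF that(3)] by blast
  qed
  define T where "T = {(a, b, c). atom a \<and> atom b \<and> atom c \<and> c \<sqsubseteq> a ;; b}"
  define W where "W t = (SOME (u, v, w). (u, v) \<in> \<phi> (fst t) \<and> (v, w) \<in> \<phi> (fst (snd t)) \<and> (u, w) \<in> \<phi> (snd (snd t)))" for t
  have W: "(u, v) \<in> \<phi> a \<and> (v, w) \<in> \<phi> b \<and> (u, w) \<in> \<phi> c" if tw: "(a, b, c) \<in> T" "W (a, b, c) = (u, v, w)" for a b c u v w
  proof -
    obtain u' v' w' where h: "(u', v') \<in> \<phi> a \<and> (v', w') \<in> \<phi> b \<and> (u', w') \<in> \<phi> c"
      using triple tw(1) unfolding T_def by blast
    have "(\<lambda>(u, v, w). (u, v) \<in> \<phi> a \<and> (v, w) \<in> \<phi> b \<and> (u, w) \<in> \<phi> c) (W (a, b, c))"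
      unfolding W_def fst_conv snd_conv by (rule someI[where x = "(u', v', w')"]) (simp add: h)
    then show ?thesis using tw(2) by simp
  qed
  define P where "P = (\<Union>t\<in>T. case W t of (u, v, w) \<Rightarrow> {u, v, w})"
  have finT: "finite T"
    using finite_subset[OF subset_UNIV finite_Prod_UNIV[OF fin finite_Prod_UNIV[OF fin fin]]] by blast
  have finP: "finite P" unfolding P_def using finT by (auto split: prod.splits)
  have PD: "P \<subseteq> D"
  proof
    fix x assume "x \<in> P"
    then obtain t where t0: "t \<in> T" "x \<in> (case W t of (u, v, w) \<Rightarrow> {u, v, w})"
      unfolding P_def by (rule UN_E)
    obtain a b c where abc: "t = (a, b, c)" by (cases t)
    obtain u v w where uvw: "W t = (u, v, w)" by (cases "W t")
    have t: "(a, b, c) \<in> T" "W (a, b, c) = (u, v, w)" "x \<in> {u, v, w}"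
      using t0 abc uvw by simp_all
    from W[OF t(1,2)] psub have "(u, v) \<in> D \<times> D" "(v, w) \<in> D \<times> D" by blast+
    then show "x \<in> D" using t(3) by blast
  qed
  obtain e where e: "bij_betw e {0..<card P} P" using ex_bij_betw_nat_finite[OF finP] by blast
  define N where "N = {0..<card P}"
  define L where "L i j = lab (e i) (e j)" for i j
  have eD: "e i \<in> D" if "i \<in> N" for i using e PD that unfolding N_def bij_betw_def by blast
  have Lat: "atom (L i j)" "(e i, e j) \<in> \<phi> (L i j)" if "i \<in> N" "j \<in> N" for i j
    using lab[OF eD[OF that(1)] eD[OF that(2)]] unfolding L_def by blast+
  have cons: "consistent_network A N L"
    unfolding consistent_network_def
  proof (intro conjI ballI)
    fix i assume i: "i \<in> N"
    have "(e i, e i) \<in> \<phi> I" using eD[OF i] pid by blast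
    then have "\<phi> (L i i \<otimes> I) \<noteq> {}" using Lat(2)[OF i i] pmeet by blast
    then show "L i i \<sqsubseteq> I" using atom_meet_nz[OF Lat(1)[OF i i]] pnz by blast
  next
    fix i j k assume i: "i \<in> N" and j: "j \<in> N" and k: "k \<in> N"
    show "(L i j ;; L j k) \<otimes> L i k \<noteq> \<zero>"
    proof
      assume "(L i j ;; L j k) \<otimes> L i k = \<zero>"
      then have "L i j ;; L j k \<sqsubseteq> \<ominus> L i k" by (simp add: meet_zero_le_compl)
      then have "\<phi> (L i j) O \<phi> (L j k) \<subseteq> \<phi> (\<ominus> L i k)" using pcomp by blast
      moreover have "(e i, e k) \<in> \<phi> (L i j) O \<phi> (L j k)" using Lat(2)[OF i j] Lat(2)[OF j k] by blast
      ultimately show False using Lat(2)[OF i k] pcompl by blast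
    qed
  next
    fix i j assume i: "i \<in> N" and j: "j \<in> N"
    have "(e i, e j) \<in> \<phi> (CV (L j i))" using Lat(2)[OF j i] pconv by blast
    then have "\<phi> (L i j \<otimes> CV (L j i)) \<noteq> {}" using Lat(2)[OF i j] pmeet by blast
    then show "L i j \<otimes> CV (L j i) \<noteq> \<zero>" using pnz by blast
  next
    fix i j assume i: "i \<in> N" and j: "j \<in> N"
    show "L i j \<noteq> \<zero>" using atom_nz[OF Lat(1)[OF i j]] .
  qed
  have atn: "atomic_network A N L" unfolding atomic_network_def using Lat(1) by blast
  have tri: "\<exists>x\<in>N. \<exists>y\<in>N. \<exists>z\<in>N. L x y = a \<and> L y z = b \<and> L x z = c"
    if "atom a" "atom b" "atom c" "c \<sqsubseteq> a ;; b" for a b c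
  proof -
    have t: "(a, b, c) \<in> T" using that unfolding T_def by simp
    obtain u v w where uvw: "W (a, b, c) = (u, v, w)" by (cases "W (a, b, c)") auto
    have mem: "(u, v) \<in> \<phi> a" "(v, w) \<in> \<phi> b" "(u, w) \<in> \<phi> c" using W[OF t uvw] by blast+
    have "u \<in> P" "v \<in> P" "w \<in> P" using t uvw unfolding P_def by force+
    have eimg: "e ` N = P" using e unfolding bij_betw_def N_def by simp
    obtain x where x: "x \<in> N" "e x = u" using \<open>u \<in> P\<close> eimg by blast
    obtain y where y: "y \<in> N" "e y = v" using \<open>v \<in> P\<close> eimg by blast
    obtain z where z: "z \<in> N" "e z = w" using \<open>w \<in> P\<close> eimg by blast
    have xyz: "x \<in> N" "y \<in> N" "z \<in> N" using x y z by simp_all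
    have "L x y = a" unfolding L_def using lab_eq[OF eD[OF x(1)] eD[OF y(1)] that(1)] mem(1) x(2) y(2) by simp
    moreover have "L y z = b" unfolding L_def using lab_eq[OF eD[OF y(1)] eD[OF z(1)] that(2)] mem(2) y(2) z(2) by simp
    moreover have "L x z = c" unfolding L_def using lab_eq[OF eD[OF x(1)] eD[OF z(1)] that(3)] mem(3) x(2) z(2) by simp
    ultimately have "L x y = a \<and> L y z = b \<and> L x z = c" by simp
    then show ?thesis using xyz by metis
  qed
  have "finite N" unfolding N_def by simp
  moreover have "\<forall>a b c. atom a \<and> atom b \<and> atom c \<and> c \<sqsubseteq> a ;; b \<longrightarrow>
               (\<exists>x\<in>N. \<exists>y\<in>N. \<exists>z\<in>N. L x y = a \<and> L y z = b \<and> L x z = c)"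
    by (intro allI impI, elim conjE, rule tri)
  ultimately show ?thesis using cons atn by (intro exI[where x = N] exI[where x = L] conjI)
qed



lemma net_to_rep:
  fixes N :: "nat set"
  assumes inf: "infinite (UNIV :: 'b set)"
    and cons: "consistent_network A N L" and atn: "atomic_network A N L"
    and tri: "\<And>a b c. atom a \<Longrightarrow> atom b \<Longrightarrow> atom c \<Longrightarrow> c \<sqsubseteq> a ;; b \<Longrightarrow>
               (\<exists>x\<in>N. \<exists>y\<in>N. \<exists>z\<in>N. L x y = a \<and> L y z = b \<and> L x z = c)"
  shows "\<exists>(D :: 'b set) \<phi>. qualitative_rep A D \<phi>"
proof -
  have c1: "L x x \<sqsubseteq> I" if "x \<in> N" for x using cons that unfolding consistent_network_def by blast
  have c2: "(L x y ;; L y z) \<otimes> L x z \<noteq> \<zero>" if "x \<in> N" "y \<in> N" "z \<in> N" for x y z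
    using cons that unfolding consistent_network_def by blast
  have c3: "L x y \<otimes> CV (L y x) \<noteq> \<zero>" if "x \<in> N" "y \<in> N" for x y
    using cons that unfolding consistent_network_def by blast
  have at: "atom (L x y)" if "x \<in> N" "y \<in> N" for x y
    using atn that unfolding atomic_network_def by blast
  have Lsym: "L x y = CV (L y x)" if "x \<in> N" "y \<in> N" for x y
    using atoms_eq[OF at[OF that] atom_conv[OF at[OF that(2,1)]] c3[OF that]] .
  have eq_sym: "L y x \<sqsubseteq> I" if "x \<in> N" "y \<in> N" "L x y \<sqsubseteq> I" for x y
  proof -
    have "L y x = CV (L x y)" by (rule Lsym[OF that(2,1)])
    also have "\<dots> \<sqsubseteq> CV I" using conv_mono that(3) by blast
    finally show ?thesis by simp
  qed
  have lab_left: "L x y = L x' y" if "x \<in> N" "x' \<in> N" "y \<in> N" "L x' x \<sqsubseteq> I" for x x' y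
  proof -
    have "L x' x ;; L x y \<sqsubseteq> I ;; L x y" using comp_mono1 that(4) by blast
    then have "L x' x ;; L x y \<sqsubseteq> L x y" by simp
    from meet_nz_mono[OF this c2[OF that(2,1,3)]] show ?thesis
      by (rule atoms_eq[OF at[OF that(1,3)] at[OF that(2,3)]])
  qed
  have lab_right: "L x y = L x y'" if "x \<in> N" "y \<in> N" "y' \<in> N" "L y y' \<sqsubseteq> I" for x y y'
  proof -
    have "L x y ;; L y y' \<sqsubseteq> L x y ;; I" using comp_mono2 that(4) by blast
    then have "L x y ;; L y y' \<sqsubseteq> L x y" by simp
    from meet_nz_mono[OF this c2[OF that(1,2,3)]] show ?thesis
      by (rule atoms_eq[OF at[OF that(1,2)] at[OF that(1,3)]])
  qed
  have eq_trans: "L x z \<sqsubseteq> I" if "x \<in> N" "y \<in> N" "z \<in> N" "L x y \<sqsubseteq> I" "L y z \<sqsubseteq> I" for x y z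
  proof -
    have "L x z = L y z" using lab_left[OF that(2,1,3,4)] by simp
    then show ?thesis using that(5) by simp
  qed
  define r where "r x = (LEAST y. y \<in> N \<and> L x y \<sqsubseteq> I)" for x
  have r_in: "r x \<in> N \<and> L x (r x) \<sqsubseteq> I" if "x \<in> N" for x
    unfolding r_def by (rule LeastI[where k = x]) (simp add: that c1)
  have r_eq: "r x = r x'" if "x \<in> N" "x' \<in> N" "L x x' \<sqsubseteq> I" for x x'
  proof -
    have "(\<lambda>y. y \<in> N \<and> L x y \<sqsubseteq> I) = (\<lambda>y. y \<in> N \<and> L x' y \<sqsubseteq> I)"
    proof (rule ext)
      fix y
      show "(y \<in> N \<and> L x y \<sqsubseteq> I) = (y \<in> N \<and> L x' y \<sqsubseteq> I)"
        using eq_trans[OF that(2,1) _ eq_sym[OF that] ] eq_trans[OF that(1,2) _ that(3)] by blast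
    qed
    then show ?thesis unfolding r_def by simp
  qed
  have r_eqv: "L x x' \<sqsubseteq> I" if "x \<in> N" "x' \<in> N" "r x = r x'" for x x'
  proof -
    have 1: "L x (r x) \<sqsubseteq> I" "r x \<in> N" using r_in[OF that(1)] by simp_all
    have 2: "L x' (r x) \<sqsubseteq> I" using r_in[OF that(2)] that(3) by simp
    have 3: "L (r x) x' \<sqsubseteq> I" using eq_sym[OF that(2) 1(2) 2] .
    show ?thesis using eq_trans[OF that(1) 1(2) that(2) 1(1) 3] .
  qed
  obtain g :: "nat \<Rightarrow> 'b" where g: "inj g" using infinite_countable_subset[OF inf] by blast
  define h where "h x = g (r x)" for x
  have h_eq: "h x = h x' \<longleftrightarrow> L x x' \<sqsubseteq> I" if "x \<in> N" "x' \<in> N" for x x'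
    unfolding h_def using g r_eq[OF that] r_eqv[OF that] by (auto dest: injD)
  define D where "D = h ` N"
  define \<phi> where "\<phi> a = {(h x, h y) | x y. x \<in> N \<and> y \<in> N \<and> L x y \<sqsubseteq> a}" for a
  have key: "(h x, h y) \<in> \<phi> a \<longleftrightarrow> L x y \<sqsubseteq> a" if "x \<in> N" "y \<in> N" for x y a
  proof
    assume "(h x, h y) \<in> \<phi> a"
    then obtain x' y' where xy': "x' \<in> N" "y' \<in> N" "L x' y' \<sqsubseteq> a" "h x = h x'" "h y = h y'"
      unfolding \<phi>_def by blast
    have "L x x' \<sqsubseteq> I" using h_eq[OF that(1) xy'(1)] xy'(4) by simp
    then have e1: "L x y = L x' y" using lab_left[OF that(1) xy'(1) that(2)] eq_sym[OF that(1) xy'(1)] by simp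
    have "L y y' \<sqsubseteq> I" using h_eq[OF that(2) xy'(2)] xy'(5) by simp
    then have e2: "L x' y = L x' y'" using lab_right[OF xy'(1) that(2) xy'(2)] by simp
    show "L x y \<sqsubseteq> a" using e1 e2 xy'(3) by simp
  next
    assume "L x y \<sqsubseteq> a"
    then show "(h x, h y) \<in> \<phi> a" unfolding \<phi>_def using that by blast
  qed
  have psub: "\<phi> a \<subseteq> D \<times> D" for a unfolding \<phi>_def D_def by blast
  have phi_ext: "\<phi> a = S" if S1: "S \<subseteq> D \<times> D" and S2: "\<And>x y. x \<in> N \<Longrightarrow> y \<in> N \<Longrightarrow> (h x, h y) \<in> S \<longleftrightarrow> L x y \<sqsubseteq> a" for a S
  proof (rule set_eqI)
    fix p
    show "p \<in> \<phi> a \<longleftrightarrow> p \<in> S"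
    proof (cases "p \<in> D \<times> D")
      case True
      then obtain x y where "x \<in> N" "y \<in> N" "p = (h x, h y)" unfolding D_def by blast
      then show ?thesis using key S2 by simp
    next
      case False
      then show ?thesis using S1 psub by blast
    qed
  qed
  have appears: "\<exists>x\<in>N. \<exists>y\<in>N. L x y = c" if ac: "atom c" for c
  proof -
    obtain e where e: "atom e" "c \<sqsubseteq> c ;; e" using atom_id[OF ac] by blast
    from tri[OF ac e(1) ac e(2)] show ?thesis by blast
  qed
  have rep: "qualitative_rep A D \<phi>"
    unfolding qualitative_rep_def
  proof (intro conjI allI)
    show "inj \<phi>"
    proof (rule injI)
      fix a b assume ab: "\<phi> a = \<phi> b"
      show "a = b"
      proof (rule atom_ext)
        fix c assume c: "atom c"
        obtain x y where xy: "x \<in> N" "y \<in> N" "L x y = c" using appears[OF c] by blast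
        show "c \<sqsubseteq> a \<longleftrightarrow> c \<sqsubseteq> b" using key[OF xy(1,2), of a] key[OF xy(1,2), of b] ab xy(3) by simp
      qed
    qed
    show "\<phi> \<zero> = {}" using phi_ext[of "{}" "\<zero>"] atom_not_bot at by simp
    show "\<phi> \<top> = D \<times> D" using phi_ext[of "D \<times> D" "\<top>"] unfolding D_def by simp
    show "\<phi> I = {(x, x) |x. x \<in> D}"
    proof (rule phi_ext)
      show "{(x, x) |x. x \<in> D} \<subseteq> D \<times> D" by blast
      fix x y assume xy: "x \<in> N" "y \<in> N"
      show "(h x, h y) \<in> {(x, x) |x. x \<in> D} \<longleftrightarrow> L x y \<sqsubseteq> I"
        using h_eq[OF xy] xy unfolding D_def by auto
    qed
    fix a
    show "\<phi> (\<ominus> a) = D \<times> D - \<phi> a"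
    proof (rule phi_ext)
      show "D \<times> D - \<phi> a \<subseteq> D \<times> D" by blast
      fix x y assume xy: "x \<in> N" "y \<in> N"
      show "(h x, h y) \<in> D \<times> D - \<phi> a \<longleftrightarrow> L x y \<sqsubseteq> \<ominus> a"
        using key[OF xy, of a] atom_compl[OF at[OF xy], of a] xy unfolding D_def by auto
    qed
    show "\<phi> (CV a) = {(y, x). (x, y) \<in> \<phi> a}"
    proof (rule phi_ext)
      show "{(y, x). (x, y) \<in> \<phi> a} \<subseteq> D \<times> D" using psub by blast
      fix x y assume xy: "x \<in> N" "y \<in> N"
      have "L x y \<sqsubseteq> CV a \<longleftrightarrow> L y x \<sqsubseteq> a" using Lsym[OF xy(2,1)] conv_le by simp
      then show "(h x, h y) \<in> {(y, x). (x, y) \<in> \<phi> a} \<longleftrightarrow> L x y \<sqsubseteq> CV a"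
        using key[OF xy(2,1), of a] by simp
    qed
    fix b
    show "\<phi> (a \<oplus> b) = \<phi> a \<union> \<phi> b"
    proof (rule phi_ext)
      show "\<phi> a \<union> \<phi> b \<subseteq> D \<times> D" using psub by blast
      fix x y assume xy: "x \<in> N" "y \<in> N"
      show "(h x, h y) \<in> \<phi> a \<union> \<phi> b \<longleftrightarrow> L x y \<sqsubseteq> a \<oplus> b"
        using key[OF xy, of a] key[OF xy, of b] atom_join[OF at[OF xy], of a b] by simp
    qed
    fix c
    show "\<phi> a O \<phi> b \<subseteq> \<phi> c \<longleftrightarrow> a ;; b \<sqsubseteq> c"
    proof
      assume sub: "\<phi> a O \<phi> b \<subseteq> \<phi> c"
      show "a ;; b \<sqsubseteq> c"
      proof (rule ccontr)
        assume "\<not> a ;; b \<sqsubseteq> c"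
        then obtain d where d: "atom d" "d \<sqsubseteq> a ;; b" "\<not> d \<sqsubseteq> c" using not_le_atom by blast
        obtain a' b' where ab': "atom a'" "atom b'" "a' \<sqsubseteq> a" "b' \<sqsubseteq> b" "d \<sqsubseteq> a' ;; b'"
          using decomp[OF d(1,2)] by blast
        obtain x y z where xyz: "x \<in> N" "y \<in> N" "z \<in> N" "L x y = a'" "L y z = b'" "L x z = d"
          using tri[OF ab'(1,2) d(1) ab'(5)] by blast
        have "(h x, h y) \<in> \<phi> a" using key[OF xyz(1,2)] xyz(4) ab'(3) by simp
        moreover have "(h y, h z) \<in> \<phi> b" using key[OF xyz(2,3)] xyz(5) ab'(4) by simp
        ultimately have "(h x, h z) \<in> \<phi> c" using sub by blast
        then show False using key[OF xyz(1,3)] xyz(6) d(3) by simp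
      qed
    next
      assume le: "a ;; b \<sqsubseteq> c"
      show "\<phi> a O \<phi> b \<subseteq> \<phi> c"
      proof
        fix p assume "p \<in> \<phi> a O \<phi> b"
        then obtain u v w where p: "p = (u, w)" "(u, v) \<in> \<phi> a" "(v, w) \<in> \<phi> b" by blast
        obtain x y where xy: "x \<in> N" "y \<in> N" "u = h x" "v = h y" "L x y \<sqsubseteq> a"
          using p(2) unfolding \<phi>_def by blast
        obtain y' z where yz: "y' \<in> N" "z \<in> N" "v = h y'" "w = h z" "L y' z \<sqsubseteq> b"
          using p(3) unfolding \<phi>_def by blast
        have "(h y, h z) \<in> \<phi> b" using key[OF yz(1,2)] yz xy(4) by simp
        then have lyz: "L y z \<sqsubseteq> b" using key[OF xy(2) yz(2)] by simp
        have "L x y ;; L y z \<sqsubseteq> c" using comp_mono[OF xy(5) lyz] le le_trans by blast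
        from meet_nz_mono[OF this c2[OF xy(1,2) yz(2)]] have "c \<otimes> L x z \<noteq> \<zero>" .
        then have "L x z \<sqsubseteq> c" using atom_meet_nz[OF at[OF xy(1) yz(2)]] mcomm by metis
        then show "p \<in> \<phi> c" using key[OF xy(1) yz(2)] p(1) xy(3) yz(4) by simp
      qed
    qed
  qed
  then show ?thesis by blast
qed


end

theorem mainTheorem5:
  fixes A :: "'a nalg"
  assumes "finite (UNIV :: 'a set)"
    and "nonassoc_algebra A"
    and "infinite (UNIV :: 'b set)"
  shows "(\<exists>(D :: 'b set) \<phi>. qualitative_rep A D \<phi>) \<longleftrightarrow>
         (\<exists>(N :: nat set) L. finite N \<and> consistent_network A N L \<and> atomic_network A N L \<and>
            (\<forall>a b c. is_atom A a \<and> is_atom A b \<and> is_atom A c \<and> nle A c (ncomp A a b) \<longrightarrow>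
               (\<exists>x\<in>N. \<exists>y\<in>N. \<exists>z\<in>N. L x y = a \<and> L y z = b \<and> L x z = c)))"
proof -
  interpret NA A using assms(1,2) by unfold_locales
  show ?thesis
  proof
    assume "\<exists>(D :: 'b set) \<phi>. qualitative_rep A D \<phi>"
    then obtain D :: "'b set" and \<phi> where "qualitative_rep A D \<phi>" by (elim exE)
    then show "\<exists>(N :: nat set) L. finite N \<and> consistent_network A N L \<and> atomic_network A N L \<and>
            (\<forall>a b c. is_atom A a \<and> is_atom A b \<and> is_atom A c \<and> nle A c (ncomp A a b) \<longrightarrow>
               (\<exists>x\<in>N. \<exists>y\<in>N. \<exists>z\<in>N. L x y = a \<and> L y z = b \<and> L x z = c))"
      by (rule rep_to_net)
  next
    assume "\<exists>(N :: nat set) L. finite N \<and> consistent_network A N L \<and> atomic_network A N L \<and>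
            (\<forall>a b c. is_atom A a \<and> is_atom A b \<and> is_atom A c \<and> nle A c (ncomp A a b) \<longrightarrow>
               (\<exists>x\<in>N. \<exists>y\<in>N. \<exists>z\<in>N. L x y = a \<and> L y z = b \<and> L x z = c))"
    then obtain N :: "nat set" and L where h: "consistent_network A N L" "atomic_network A N L"
      "\<forall>a b c. is_atom A a \<and> is_atom A b \<and> is_atom A c \<and> nle A c (ncomp A a b) \<longrightarrow>
               (\<exists>x\<in>N. \<exists>y\<in>N. \<exists>z\<in>N. L x y = a \<and> L y z = b \<and> L x z = c)"
      by (elim exE conjE)
    have tri: "\<exists>x\<in>N. \<exists>y\<in>N. \<exists>z\<in>N. L x y = a \<and> L y z = b \<and> L x z = c"
      if "is_atom A a" "is_atom A b" "is_atom A c" "nle A c (ncomp A a b)" for a b c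
      using h(3) that by (elim allE impE) (intro conjI; assumption)
    show "\<exists>(D :: 'b set) \<phi>. qualitative_rep A D \<phi>"
      by (rule net_to_rep[OF assms(3) h(1) h(2) tri])
  qed
qed

end
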